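(* For a non-negative integer $n$ and real numbers $p,x$, define \[ G_n(p,x)=\sum_{i=0}^n\binom{n}{i}\big((1-x)p+ix/n\big)^i\big(1-(1-x)p-ix/n\big)^{n-i}. \] Then for all non-negative integers $n$ (and all real $p,x$), \[ G_n(p,x)=\sum_{i=0}^n\frac{n!}{n^i(n-i)!}\,x^i. \]
   Context: Conventions: $0^0=1$; when $i=n=0$, the quantity $ix/n$ is interpreted with $0/0=1$ (so $G_0(p,x)=1$). *)

theory Defs
  imports Complex_Main
begin

definition G :: "nat \<Rightarrow> real \<Rightarrow> real \<Rightarrow> real" where
  "G n p x = (\<Sum>i=0..n. real (n choose i)
      * ((1 - x) * p + real i * x / real n) ^ i
      * (1 - (1 - x) * p - real i * x / real n) ^ (n - i))"

end

theory Submission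
  imports Defs
begin

lemma Slem:
  "\<forall>m\<le>n. (\<Sum>k\<le>n. (-1::real)^(n-k) * real (n choose k) * real k ^ m) = (if m = n then fact n else 0)"
proof (induction n)
  case 0
  then show ?case by simp
next
  case (Suc n)
  show ?case
  proof (intro allI impI)
    fix m assume m: "m \<le> Suc n"
    show "(\<Sum>k\<le>Suc n. (-1::real)^(Suc n-k) * real (Suc n choose k) * real k ^ m) = (if m = Suc n then fact (Suc n) else 0)"
    proof (cases m)
      case 0
      have "(1 + (-1::real))^(Suc n) = (\<Sum>k\<le>Suc n. real (Suc n choose k) * 1^k * (-1)^(Suc n-k))"
        by (rule binomial_ring)
      then have "(\<Sum>k\<le>Suc n. (-1::real)^(Suc n-k) * real (Suc n choose k)) = 0"
        by (simp add: mult.commute)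
      then show ?thesis using 0 by simp
    next
      case (Suc m')
      have mn: "m' \<le> n" using m Suc by simp
      have "(\<Sum>k\<le>Suc n. (-1::real)^(Suc n-k) * real (Suc n choose k) * real k ^ m)
          = (\<Sum>j\<le>n. (-1::real)^(Suc n-Suc j) * real (Suc n choose Suc j) * real (Suc j) ^ Suc m')"
        unfolding Suc by (subst sum.atMost_Suc_shift) simp
      also have "\<dots> = (\<Sum>j\<le>n. real (Suc n) * ((-1::real)^(n-j) * real (n choose j) * (real j + 1) ^ m'))"
      proof (rule sum.cong[OF refl])
        fix j
        have e: "real (Suc j) * real (Suc n choose Suc j) = real (Suc n) * real (n choose j)"
          using Suc_times_binomial[of j n] by (metis of_nat_mult)
        show "(-1::real)^(Suc n-Suc j) * real (Suc n choose Suc j) * real (Suc j) ^ Suc m' = real (Suc n) * ((-1::real)^(n-j) * real (n choose j) * (real j + 1) ^ m')"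
        proof -
          have g: "\<And>(s::real) c d q. s * c * d ^ Suc m' = s * (d * c) * d ^ m'" by simp
          show ?thesis
            apply (subst g)
            apply (subst e)
            apply (simp del: of_nat_Suc)
            apply (simp add: add.commute)
            done
        qed
      qed
      also have "\<dots> = real (Suc n) * (\<Sum>j\<le>n. (\<Sum>i\<le>m'. real (m' choose i) * ((-1::real)^(n-j) * real (n choose j) * real j ^ i)))"
      proof -
        have "\<And>j. (real j + 1) ^ m' = (\<Sum>i\<le>m'. real (m' choose i) * real j ^ i)"
          using binomial_ring[of "real _" 1 m'] by simp
        then show ?thesis
          by (simp add: sum_distrib_left mult_ac)
      qed
      also have "\<dots> = real (Suc n) * (\<Sum>i\<le>m'. real (m' choose i) * (\<Sum>j\<le>n. (-1::real)^(n-j) * real (n choose j) * real j ^ i))"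
        by (simp add: sum.swap[of _ "{..n}"] sum_distrib_left)
      also have "\<dots> = real (Suc n) * (\<Sum>i\<le>m'. real (m' choose i) * (if i = n then fact n else 0))"
        using Suc.IH mn by (intro arg_cong2[where f="(*)"] refl sum.cong) auto
      also have "\<dots> = (if m = Suc n then fact (Suc n) else 0)"
        using mn Suc by (auto simp: if_distrib[of "\<lambda>v. _ * v"] sum.delta cong: if_cong)
      finally show ?thesis .
    qed
  qed
qed
lemma tri:
  fixes g :: "nat \<Rightarrow> nat \<Rightarrow> real"
  shows "(\<Sum>k\<le>n. \<Sum>l\<le>n-k. g k (k+l)) = (\<Sum>m\<le>n. \<Sum>k\<le>m. g k m)"
proof -
  have A: "(\<Sum>l\<le>n-k. g k (k+l)) = (\<Sum>m\<le>n. if k \<le> m then g k m else 0)" if "k \<le> n" for k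
  proof -
    have "(\<Sum>l\<le>n-k. g k (k+l)) = (\<Sum>m\<in>{k..n}. g k m)"
      by (rule sum.reindex_bij_witness[of _ "\<lambda>m. m - k" "\<lambda>l. k + l"]) (use that in auto)
    also have "{k..n} = {m\<in>{..n}. k \<le> m}" by auto
    also have "sum (g k) \<dots> = (\<Sum>m\<le>n. if k \<le> m then g k m else 0)"
      by (rule sum.inter_filter) simp
    finally show ?thesis .
  qed
  have B: "(\<Sum>k\<le>m. g k m) = (\<Sum>k\<le>n. if k \<le> m then g k m else 0)" if "m \<le> n" for m
  proof -
    have "{..m} = {k\<in>{..n}. k \<le> m}" using that by auto
    then have "(\<Sum>k\<le>m. g k m) = sum (\<lambda>k. g k m) {k\<in>{..n}. k \<le> m}" by simp
    also have "\<dots> = (\<Sum>k\<le>n. if k \<le> m then g k m else 0)"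
      by (rule sum.inter_filter) simp
    finally show ?thesis .
  qed
  have "(\<Sum>k\<le>n. \<Sum>l\<le>n-k. g k (k+l)) = (\<Sum>k\<le>n. \<Sum>m\<le>n. if k \<le> m then g k m else 0)"
    by (rule sum.cong[OF refl]) (simp add: A)
  also have "\<dots> = (\<Sum>m\<le>n. \<Sum>k\<le>n. if k \<le> m then g k m else 0)"
    by (rule sum.swap)
  also have "\<dots> = (\<Sum>m\<le>n. \<Sum>k\<le>m. g k m)"
    by (rule sum.cong[OF refl]) (simp add: B)
  finally show ?thesis .
qed

lemma L2:
  fixes a z :: real
  shows "(\<Sum>k\<le>m. (-1)^(m-k) * real (m choose k) * (a + real k * z)^m) = fact m * z^m"
proof -
  have e: "(a + real k * z)^m = (\<Sum>i\<le>m. real (m choose i) * z^i * a^(m-i) * real k ^ i)" for k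
    using binomial_ring[of "real k * z" a m] by (simp add: add.commute mult_ac power_mult_distrib)
  have "(\<Sum>k\<le>m. (-1)^(m-k) * real (m choose k) * (a + real k * z)^m)
      = (\<Sum>k\<le>m. \<Sum>i\<le>m. real (m choose i) * z^i * a^(m-i) * ((-1)^(m-k) * real (m choose k) * real k ^ i))"
    unfolding e by (simp add: sum_distrib_left mult_ac)
  also have "\<dots> = (\<Sum>i\<le>m. real (m choose i) * z^i * a^(m-i) * (\<Sum>k\<le>m. (-1)^(m-k) * real (m choose k) * real k ^ i))"
    by (subst sum.swap) (simp add: sum_distrib_left)
  also have "\<dots> = (\<Sum>i\<le>m. real (m choose i) * z^i * a^(m-i) * (if i = m then fact m else 0))"
    using Slem[of m] by (intro sum.cong) auto
  also have "\<dots> = fact m * z^m"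
    by (simp add: if_distrib[of "\<lambda>v. _ * v"] sum.delta cong: if_cong)
  finally show ?thesis .
qed

lemma L3:
  fixes a z s :: real
  shows "(\<Sum>k\<le>n. real (n choose k) * (a + real k * z)^k * (s - a - real k * z)^(n-k))
       = (\<Sum>m\<le>n. real (n choose m) * fact m * z^m * s^(n-m))"
proof -
  define g where "g k m = real (n choose k) * real ((n-k) choose (m-k)) * (-1)^(m-k) * (a + real k * z)^m * s^(n-m)" for k m
  have "(\<Sum>k\<le>n. real (n choose k) * (a + real k * z)^k * (s - a - real k * z)^(n-k))
      = (\<Sum>k\<le>n. \<Sum>l\<le>n-k. g k (k+l))"
  proof (rule sum.cong[OF refl])
    fix k assume k: "k \<in> {..n}"
    have "(s - a - real k * z)^(n-k) = (\<Sum>l\<le>n-k. real ((n-k) choose l) * (-(a + real k * z))^l * s^(n-k-l))"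
    proof -
      have "s - a - real k * z = (-(a + real k * z)) + s" by simp
      then show ?thesis by (simp only: binomial_ring)
    qed
    note bin = this
    show "real (n choose k) * (a + real k * z)^k * (s - a - real k * z)^(n-k) = (\<Sum>l\<le>n-k. g k (k+l))"
      unfolding g_def bin sum_distrib_left
    proof (intro sum.cong refl)
      fix l
      show "real (n choose k) * (a + real k * z)^k * (real ((n-k) choose l) * (-(a + real k * z))^l * s^(n-k-l))
        = real (n choose k) * real ((n-k) choose (k+l-k)) * (-1)^(k+l-k) * (a + real k * z)^(k+l) * s^(n-(k+l))"
      proof -
        have pm: "(-(a + real k * z))^l = (-1)^l * (a + real k * z)^l" by (rule power_minus)
        show ?thesis
          by (simp only: pm power_add diff_diff_left add_diff_cancel_left') (simp only: mult_ac)
      qed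
    qed
  qed
  also have "\<dots> = (\<Sum>m\<le>n. \<Sum>k\<le>m. g k m)" by (rule tri)
  also have "\<dots> = (\<Sum>m\<le>n. real (n choose m) * s^(n-m) * (\<Sum>k\<le>m. (-1)^(m-k) * real (m choose k) * (a + real k * z)^m))"
  proof (rule sum.cong[OF refl])
    fix m assume m: "m \<in> {..n}"
    have "g k m = real (n choose m) * s^(n-m) * ((-1)^(m-k) * real (m choose k) * (a + real k * z)^m)" if "k \<le> m" for k
    proof -
      have "real (n choose k) * real ((n-k) choose (m-k)) = real (n choose m) * real (m choose k)"
        using choose_mult[of k m n] that m by (metis atMost_iff of_nat_mult)
      note cm = this
      have "g k m = (real (n choose k) * real ((n-k) choose (m-k))) * ((-1)^(m-k) * (a + real k * z)^m * s^(n-m))"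
        unfolding g_def by (simp only: mult_ac)
      also have "\<dots> = (real (n choose m) * real (m choose k)) * ((-1)^(m-k) * (a + real k * z)^m * s^(n-m))"
        by (simp only: cm)
      finally show ?thesis by (simp only: mult_ac)
    qed
    then show "(\<Sum>k\<le>m. g k m) = real (n choose m) * s^(n-m) * (\<Sum>k\<le>m. (-1)^(m-k) * real (m choose k) * (a + real k * z)^m)"
      by (simp add: sum_distrib_left)
  qed
  also have "\<dots> = (\<Sum>m\<le>n. real (n choose m) * fact m * z^m * s^(n-m))"
    unfolding L2 by (simp add: mult_ac)
  finally show ?thesis .
qed

theorem lemma2p8:
  fixes n :: nat and p x :: real
  shows "G n p x = (\<Sum>i=0..n. fact n / (real n ^ i * fact (n - i)) * x ^ i)"
proof (cases "n = 0")
  case True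
  then show ?thesis by (simp add: G_def)
next
  case False
  define a where "a = (1 - x) * p"
  define z where "z = x / real n"
  have "G n p x = (\<Sum>k\<le>n. real (n choose k) * (a + real k * z)^k * (1 - a - real k * z)^(n-k))"
    unfolding G_def a_def z_def atLeast0AtMost by (simp add: times_divide_eq_right)
  also have "\<dots> = (\<Sum>m\<le>n. real (n choose m) * fact m * z^m * 1^(n-m))" by (rule L3)
  also have "\<dots> = (\<Sum>i=0..n. fact n / (real n ^ i * fact (n - i)) * x ^ i)"
    unfolding atLeast0AtMost
  proof (rule sum.cong[OF refl])
    fix m assume m: "m \<in> {..n}"
    have cf: "real (n choose m) = fact n / (fact m * fact (n - m))"
      using m by (simp add: binomial_fact)
    then show "real (n choose m) * fact m * z^m * 1^(n-m) = fact n / (real n ^ m * fact (n - m)) * x ^ m"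
      unfolding z_def cf by (simp add: power_divide)
  qed
  finally show ?thesis .
qed

end
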